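(* Let $q\ge 1$ and $t\ge0$ be integers. (1) If a code $\mathcal{C}\subseteq\mathcal{S}_{\mathrm{all}}^q$ is a $2t$-tail-deletion-correcting code, then it is a $t$-tail-indel-correcting code. However, the converse does not hold in general: there exist $q$, $t$ and a code $\mathcal{C}\subseteq\mathcal{S}_{\mathrm{all}}^q$ that is $t$-tail-indel-correcting but not $2t$-tail-deletion-correcting. (2) For every integer $t\ge1$ there exist an integer $q$ and a code $\mathcal{C}\subseteq\mathcal{S}_{\mathrm{all}}^q$ that is a $(2t-1)$-tail-deletion-correcting code but not a $t$-tail-indel-correcting code.
   Context: Let $[q]=\{0,1,\dots,q-1\}$. For $1\le m\le q$, a partial permutation of length $m$ over $[q]$ is a sequence $\pi=(\pi_1,\dots,\pi_m)$ of $m$ pairwise distinct elements of $[q]$. Let $\mathcal{S}_m^q$ be the set of those of length $m$ and $\mathcal{S}_{\mathrm{all}}^q=\bigcup_{m=1}^{q}\mathcal{S}_m^q$. A code is any subset of $\mathcal{S}_{\mathrm{all}}^q$. Tail deletions: for $\pi$ of length $m$ and integer $j\ge 0$, $\pi_{\downarrow j}=(\pi_{k+1},\dots,\pi_m)$ with $k=\min(j,m-1)$ (leftmost symbols are deleted; the last symbol is never deleted); $\mathcal{B}_{\mathrm{del}}^t(\pi)=\{\pi_{\downarrow j}:0\le j\le t\}$. Tail indels: $\mathcal{B}_{\mathrm{indel}}^t(\pi)$ is the set of all partial permutations obtainable from $\pi$ by a sequence of at most $t$ operations, each being either a single tail deletion (removing the first symbol of a partial permutation of length at least $2$) or a single tail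 insertion (prepending an element of $[q]$ not already occurring in it). For $X\in\{\mathrm{del},\mathrm{indel}\}$, a code $\mathcal{C}$ is $t$-tail-$X$-correcting if $\mathcal{B}_X^t(\pi_1)\cap\mathcal{B}_X^t(\pi_2)=\emptyset$ for all distinct $\pi_1,\pi_2\in\mathcal{C}$. *)

theory Defs
  imports Main
begin

text \<open>Partial permutations over [q] = {0..q-1} are represented as lists of naturals.\<close>

definition pperm :: "nat \<Rightarrow> nat list \<Rightarrow> bool" where
  "pperm q \<pi> \<longleftrightarrow> distinct \<pi> \<and> set \<pi> \<subseteq> {..<q} \<and> 1 \<le> length \<pi> \<and> length \<pi> \<le> q"

definition S_all :: "nat \<Rightarrow> nat list set" where
  "S_all q = {\<pi>. pperm q \<pi>}"

definition tail_del :: "nat list \<Rightarrow> nat \<Rightarrow> nat list" where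
  "tail_del \<pi> j = drop (min j (length \<pi> - 1)) \<pi>"

definition B_del :: "nat \<Rightarrow> nat list \<Rightarrow> nat list set" where
  "B_del t \<pi> = {tail_del \<pi> j | j. j \<le> t}"

definition indel_step :: "nat \<Rightarrow> nat list \<Rightarrow> nat list \<Rightarrow> bool" where
  "indel_step q \<sigma> \<tau> \<longleftrightarrow>
     (2 \<le> length \<sigma> \<and> \<tau> = tl \<sigma>) \<or> (\<exists>a. a < q \<and> a \<notin> set \<sigma> \<and> \<tau> = a # \<sigma>)"

definition B_indel :: "nat \<Rightarrow> nat \<Rightarrow> nat list \<Rightarrow> nat list set" where
  "B_indel q t \<pi> = {\<sigma>. \<exists>k\<le>t. (indel_step q ^^ k) \<pi> \<sigma>}"

definition tail_del_correcting :: "nat \<Rightarrow> nat list set \<Rightarrow> bool" where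
  "tail_del_correcting t C \<longleftrightarrow>
     (\<forall>\<pi>1\<in>C. \<forall>\<pi>2\<in>C. \<pi>1 \<noteq> \<pi>2 \<longrightarrow> B_del t \<pi>1 \<inter> B_del t \<pi>2 = {})"

definition tail_indel_correcting :: "nat \<Rightarrow> nat \<Rightarrow> nat list set \<Rightarrow> bool" where
  "tail_indel_correcting q t C \<longleftrightarrow>
     (\<forall>\<pi>1\<in>C. \<forall>\<pi>2\<in>C. \<pi>1 \<noteq> \<pi>2 \<longrightarrow> B_indel q t \<pi>1 \<inter> B_indel q t \<pi>2 = {})"

end

theory Submission
  imports Defs
begin

lemma indel_pow_shape:
  assumes "(indel_step q ^^ n) \<pi> \<sigma>" "\<pi> \<noteq> []"
  shows "\<exists>w k. \<sigma> = w @ drop k \<pi> \<and> k < length \<pi> \<and> length w + k \<le> n"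
  using assms(1)
proof (induction n arbitrary: \<sigma>)
  case 0
  then show ?case using assms(2) by (intro exI[of _ "[]"] exI[of _ 0]) auto
next
  case (Suc n)
  then obtain \<sigma>' where h1: "(indel_step q ^^ n) \<pi> \<sigma>'" and h2: "indel_step q \<sigma>' \<sigma>"
    by auto
  from Suc.IH[OF h1] obtain w k where w: "\<sigma>' = w @ drop k \<pi>" "k < length \<pi>" "length w + k \<le> n"
    by blast
  from h2 show ?case unfolding indel_step_def
  proof
    assume d: "2 \<le> length \<sigma>' \<and> \<sigma> = tl \<sigma>'"
    show ?case
    proof (cases w)
      case Nil
      then show ?thesis using d w
        by (intro exI[of _ "[]"] exI[of _ "Suc k"]) (auto simp: drop_Suc tl_drop)
    next
      case (Cons a w')
      then show ?thesis using d w
        by (intro exI[of _ w'] exI[of _ k]) auto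
    qed
  next
    assume "\<exists>a. a < q \<and> a \<notin> set \<sigma>' \<and> \<sigma> = a # \<sigma>'"
    then obtain a where "\<sigma> = a # \<sigma>'" by blast
    then show ?case using w by (intro exI[of _ "a # w"] exI[of _ k]) auto
  qed
qed

lemma B_indel_shape:
  assumes "\<sigma> \<in> B_indel q t \<pi>" "\<pi> \<noteq> []"
  shows "\<exists>w k. \<sigma> = w @ drop k \<pi> \<and> k < length \<pi> \<and> length w + k \<le> t"
proof -
  from assms obtain n where "n \<le> t" "(indel_step q ^^ n) \<pi> \<sigma>" unfolding B_indel_def by auto
  with indel_pow_shape[OF _ assms(2)] show ?thesis by fastforce
qed

lemma common_del_aux:
  assumes "w1 @ drop k1 p1 = w2 @ drop k2 p2" "k1 < length p1" "k2 < length p2"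
    "length w1 + k1 \<le> t" "length w2 + k2 \<le> t"
    "length (drop k1 p1) \<le> length (drop k2 p2)"
  shows "B_del (2*t) p1 \<inter> B_del (2*t) p2 \<noteq> {}"
proof -
  let ?j = "k2 + length w1 - length w2"
  have lens: "length w1 + length (drop k1 p1) = length w2 + length (drop k2 p2)"
    using arg_cong[OF assms(1), of length] by (simp only: length_append)
  have lw: "length w2 \<le> length w1"
    using lens assms(6) by linarith
  have e1: "drop (length w1) (w1 @ drop k1 p1) = drop k1 p1" by simp
  have "drop (length w1) (w2 @ drop k2 p2) = drop (length w1 - length w2) (drop k2 p2)"
    using lw by simp
  also have "\<dots> = drop ?j p2" using lw by (simp add: add.commute)
  finally have e2: "drop k1 p1 = drop ?j p2" using assms(1) e1 by simp
  have j1: "?j < length p2" using e2 assms(2) lw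
    by (metis drop_eq_Nil2 leD length_drop zero_less_diff not_le)
  have "tail_del p1 k1 = drop k1 p1" using assms(2) by (simp add: tail_del_def)
  moreover have "tail_del p2 ?j = drop ?j p2" using j1 by (simp add: tail_del_def)
  moreover have "k1 \<le> 2*t" "?j \<le> 2*t" using assms(4,5) by auto
  ultimately have "drop k1 p1 \<in> B_del (2*t) p1 \<inter> B_del (2*t) p2"
    unfolding B_del_def using e2 by (metis (mono_tags, lifting) IntI mem_Collect_eq)
  then show ?thesis by blast
qed

lemma part1:
  assumes "\<pi>1 \<noteq> []" "\<pi>2 \<noteq> []" "B_del (2*t) \<pi>1 \<inter> B_del (2*t) \<pi>2 = {}"
  shows "B_indel q t \<pi>1 \<inter> B_indel q t \<pi>2 = {}"
proof (rule ccontr)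
  assume "B_indel q t \<pi>1 \<inter> B_indel q t \<pi>2 \<noteq> {}"
  then obtain \<sigma> where s1: "\<sigma> \<in> B_indel q t \<pi>1" and s2: "\<sigma> \<in> B_indel q t \<pi>2" by blast
  obtain w1 k1 where a: "\<sigma> = w1 @ drop k1 \<pi>1" "k1 < length \<pi>1" "length w1 + k1 \<le> t"
    using B_indel_shape[OF s1 assms(1)] by blast
  obtain w2 k2 where b: "\<sigma> = w2 @ drop k2 \<pi>2" "k2 < length \<pi>2" "length w2 + k2 \<le> t"
    using B_indel_shape[OF s2 assms(2)] by blast
  show False
  proof (cases "length (drop k1 \<pi>1) \<le> length (drop k2 \<pi>2)")
    case True
    from common_del_aux[OF _ a(2) b(2) a(3) b(3) True] a(1) b(1) assms(3) show False by simp
  next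
    case False
    from common_del_aux[OF _ b(2) a(2) b(3) a(3)] False a(1) b(1) assms(3) show False by auto
  qed
qed

lemma ins_chain:
  assumes "n \<le> t"
  shows "(indel_step (2*t+1) ^^ n) [2*t] [2*t-n..<2*t+1]"
  using assms
proof (induction n)
  case 0
  then show ?case by simp
next
  case (Suc n)
  have "indel_step (2*t+1) [2*t-n..<2*t+1] [2*t - Suc n..<2*t+1]"
    unfolding indel_step_def using Suc.prems
    by (intro disjI2 exI[of _ "2*t - Suc n"]) (auto simp: upt_rec[of "2*t - Suc n"] Suc_diff_Suc)
  with Suc show ?case by auto
qed

lemma del_chain:
  assumes "n \<le> 2*t"
  shows "(indel_step q ^^ n) [0..<2*t+1] [n..<2*t+1]"
  using assms
proof (induction n)
  case 0
  then show ?case by simp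
next
  case (Suc n)
  have "indel_step q [n..<2*t+1] [Suc n..<2*t+1]"
    unfolding indel_step_def using Suc.prems
    by (intro disjI1) (auto simp: upt_rec[of n])
  with Suc show ?case by auto
qed

theorem mainTheorem6:
  shows "(\<forall>q t C. 1 \<le> q \<longrightarrow> C \<subseteq> S_all q \<longrightarrow>
            tail_del_correcting (2 * t) C \<longrightarrow> tail_indel_correcting q t C)
       \<and> (\<exists>q t C. 1 \<le> q \<and> C \<subseteq> S_all q \<and>
            tail_indel_correcting q t C \<and> \<not> tail_del_correcting (2 * t) C)
       \<and> (\<forall>t. 1 \<le> t \<longrightarrow> (\<exists>q C. 1 \<le> q \<and> C \<subseteq> S_all q \<and>
            tail_del_correcting (2 * t - 1) C \<and> \<not> tail_indel_correcting q t C))"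
proof (intro conjI)
  show "\<forall>q t C. 1 \<le> q \<longrightarrow> C \<subseteq> S_all q \<longrightarrow>
            tail_del_correcting (2 * t) C \<longrightarrow> tail_indel_correcting q t C"
  proof (intro allI impI)
    fix q t C assume "1 \<le> q" "C \<subseteq> S_all q" "tail_del_correcting (2 * t) C"
    have ne: "\<And>p. p \<in> C \<Longrightarrow> p \<noteq> []"
      using \<open>C \<subseteq> S_all q\<close> by (auto simp: S_all_def pperm_def)
    show "tail_indel_correcting q t C"
      unfolding tail_indel_correcting_def
    proof (intro ballI impI)
      fix p1 p2 assume "p1 \<in> C" "p2 \<in> C" "p1 \<noteq> p2"
      then have "B_del (2*t) p1 \<inter> B_del (2*t) p2 = {}"
        using \<open>tail_del_correcting (2 * t) C\<close> unfolding tail_del_correcting_def by blast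
      then show "B_indel q t p1 \<inter> B_indel q t p2 = {}"
        by (rule part1[OF ne[OF \<open>p1 \<in> C\<close>] ne[OF \<open>p2 \<in> C\<close>]])
    qed
  qed
next
  let ?p1 = "[0,1,2::nat]" and ?p2 = "[3,2::nat]"
  have ne: "?p1 \<noteq> ?p2" by simp
  have dis: "B_indel 4 1 ?p1 \<inter> B_indel 4 1 ?p2 = {}"
  proof (rule ccontr)
    assume "B_indel 4 1 ?p1 \<inter> B_indel 4 1 ?p2 \<noteq> {}"
    then obtain \<sigma> where s1: "\<sigma> \<in> B_indel 4 1 ?p1" and s2: "\<sigma> \<in> B_indel 4 1 ?p2" by blast
    obtain w1 k1 where a: "\<sigma> = w1 @ drop k1 ?p1" "k1 < 3" "length w1 + k1 \<le> 1"
      using B_indel_shape[OF s1] by auto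
    obtain w2 k2 where b: "\<sigma> = w2 @ drop k2 ?p2" "k2 < 2" "length w2 + k2 \<le> 1"
      using B_indel_shape[OF s2] by auto
    have A: "\<sigma> = [0,1,2] \<or> \<sigma> = [1,2] \<or> (\<exists>a. \<sigma> = [a,0,1,2])"
      using a by (cases w1; cases k1) auto
    have B: "\<sigma> = [3,2] \<or> \<sigma> = [2] \<or> (\<exists>a. \<sigma> = [a,3,2])"
      using b by (cases w2; cases k2) auto
    from A B show False by auto
  qed
  have nd: "\<not> tail_del_correcting 2 {?p1, ?p2}"
  proof -
    have "[2] \<in> B_del 2 ?p1" unfolding B_del_def tail_del_def
      by (rule CollectI, rule exI[of _ 2]) simp
    moreover have "[2] \<in> B_del 2 ?p2" unfolding B_del_def tail_del_def
      by (rule CollectI, rule exI[of _ 1]) simp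
    ultimately have "B_del 2 ?p1 \<inter> B_del 2 ?p2 \<noteq> {}" by blast
    then show ?thesis unfolding tail_del_correcting_def by simp
  qed
  have ic: "tail_indel_correcting 4 1 {?p1, ?p2}"
    unfolding tail_indel_correcting_def using dis by (simp add: Int_commute)
  have sub: "{?p1, ?p2} \<subseteq> S_all 4" by (auto simp: S_all_def pperm_def)
  show "\<exists>q t C. 1 \<le> q \<and> C \<subseteq> S_all q \<and>
            tail_indel_correcting q t C \<and> \<not> tail_del_correcting (2 * t) C"
    by (rule exI[of _ 4], rule exI[of _ 1], rule exI[of _ "{?p1, ?p2}"]) (use ic nd sub in simp)
next
  show "\<forall>t. 1 \<le> t \<longrightarrow> (\<exists>q C. 1 \<le> q \<and> C \<subseteq> S_all q \<and>
            tail_del_correcting (2 * t - 1) C \<and> \<not> tail_indel_correcting q t C)"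
  proof (intro allI impI)
    fix t :: nat assume t: "1 \<le> t"
    let ?p1 = "[2*t]" and ?p2 = "[0..<2*t+1]"
    have ne: "?p1 \<noteq> ?p2"
    proof
      assume "?p1 = ?p2"
      then have "length ?p1 = length ?p2" by (rule arg_cong)
      with t show False by simp
    qed
    have sub: "{?p1, ?p2} \<subseteq> S_all (2*t+1)" by (auto simp: S_all_def pperm_def)
    have B1: "\<forall>x\<in>B_del (2*t-1) ?p1. length x = 1"
    proof
      fix x assume "x \<in> B_del (2*t-1) ?p1"
      then obtain j where "x = tail_del ?p1 j" unfolding B_del_def by blast
      then show "length x = 1" by (simp add: tail_del_def)
    qed
    have B2: "\<forall>x\<in>B_del (2*t-1) ?p2. 2 \<le> length x"
    proof
      fix x assume "x \<in> B_del (2*t-1) ?p2"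
      then obtain j where j: "x = tail_del ?p2 j" "j \<le> 2*t-1" unfolding B_del_def by blast
      have "length x = 2*t+1 - min j (2*t)" using j(1) by (simp add: tail_del_def)
      then show "2 \<le> length x" using j(2) t by linarith
    qed
    have B12: "B_del (2*t-1) ?p1 \<inter> B_del (2*t-1) ?p2 = {}"
    proof (rule ccontr)
      assume "B_del (2*t-1) ?p1 \<inter> B_del (2*t-1) ?p2 \<noteq> {}"
      then obtain x where "x \<in> B_del (2*t-1) ?p1" "x \<in> B_del (2*t-1) ?p2" by blast
      with B1 B2 have "length x = 1" "2 \<le> length x" by auto
      then show False by linarith
    qed
    have dc: "tail_del_correcting (2*t-1) {?p1, ?p2}"
      unfolding tail_del_correcting_def using B12 by (simp add: Int_commute)
    have c1: "(indel_step (2*t+1) ^^ t) [2*t] [2*t-t..<2*t+1]" by (rule ins_chain) simp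
    have c2: "(indel_step (2*t+1) ^^ t) [0..<2*t+1] [t..<2*t+1]" by (rule del_chain) simp
    have tt: "2*t - t = t" by simp
    have i1: "[t..<2*t+1] \<in> B_indel (2*t+1) t ?p1"
      unfolding B_indel_def using c1 tt by (intro CollectI exI[of _ t]) simp
    have i2: "[t..<2*t+1] \<in> B_indel (2*t+1) t ?p2"
      unfolding B_indel_def using c2 by (intro CollectI exI[of _ t]) simp
    have nic: "\<not> tail_indel_correcting (2*t+1) t {?p1, ?p2}"
    proof
      assume "tail_indel_correcting (2*t+1) t {?p1, ?p2}"
      then have "B_indel (2*t+1) t ?p1 \<inter> B_indel (2*t+1) t ?p2 = {}"
        unfolding tail_indel_correcting_def using ne by simp
      with i1 i2 show False by blast
    qed
    show "\<exists>q C. 1 \<le> q \<and> C \<subseteq> S_all q \<and>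
            tail_del_correcting (2 * t - 1) C \<and> \<not> tail_indel_correcting q t C"
      by (rule exI[of _ "2*t+1"], rule exI[of _ "{?p1, ?p2}"]) (use sub dc nic in simp)
  qed
qed

end
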